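(* Let $p\ge3$ be a prime and $G_7=T\rtimes\langle x,y\rangle\le AGL(2,p)$ with $x=\|1,1;0,1\|$ and $y=\|-1,0;0,-1\|$. Let $H=\langle r_1,r_2\rangle\le G_7$ with $|r_1|=|r_2|=2$ and $H\cong D_{2p}$, and suppose $\mathrm{Core}_{G_7}(H)=1$. Then for every $r_0\in G_7$ with $|r_0|=2$ we have $\langle r_0,r_1,r_2\rangle\ne G_7$.
   Context: $D_{2p}$ is dihedral of order $2p$; $\mathrm{Core}_G(H)=\bigcap_{g\in G}g^{-1}Hg$. $\|a,b;c,d\|$ is the $2\times2$ matrix over $\mathbb{F}_p$ with rows $(a,b),(c,d)$; $T\cong\mathbb{Z}_p^2$ is the group of translations $t_a:v\mapsto v+a$ of $V=\mathbb{F}_p^2$ (row vectors, right $GL(2,p)$-action), $AGL(2,p)=T\rtimes GL(2,p)$ with $g^{-1}t_ag=t_{ag}$. *)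

theory Defs
  imports "HOL-Algebra.Algebra"
begin

text \<open>The plane V = F_p^2, encoded as pairs of residues in {0..<p}.\<close>
definition Vp :: "int \<Rightarrow> (int \<times> int) set" where
  "Vp p = {0..<p} \<times> {0..<p}"

definition transl :: "int \<Rightarrow> int \<times> int \<Rightarrow> (int \<times> int \<Rightarrow> int \<times> int)" where
  "transl p a = (\<lambda>v\<in>Vp p. ((fst v + fst a) mod p, (snd v + snd a) mod p))"

text \<open>Right action of the matrix ||a,b;c,d|| on row vectors: (v1,v2) |-> (v1 a + v2 c, v1 b + v2 d).\<close>
definition matmap :: "int \<Rightarrow> int \<Rightarrow> int \<Rightarrow> int \<Rightarrow> int \<Rightarrow> (int \<times> int \<Rightarrow> int \<times> int)" where
  "matmap p a b c d = (\<lambda>v\<in>Vp p. ((fst v * a + snd v * c) mod p, (fst v * b + snd v * d) mod p))"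

text \<open>G_7 = T \<rtimes> <x,y> with x = ||1,1;0,1||, y = ||-1,0;0,-1||, as a permutation group on V.\<close>
definition G7_carrier :: "int \<Rightarrow> (int \<times> int \<Rightarrow> int \<times> int) set" where
  "G7_carrier p = generate (BijGroup (Vp p))
      ((transl p ` Vp p) \<union> {matmap p 1 1 0 1, matmap p (-1) 0 0 (-1)})"

definition G7 :: "int \<Rightarrow> (int \<times> int \<Rightarrow> int \<times> int) monoid" where
  "G7 p = (BijGroup (Vp p)) \<lparr>carrier := G7_carrier p\<rparr>"

text \<open>Dihedral group of order 2n: elements (i,e), i mod n, e in {0,1};
  (i,0) rotations, (i,1) reflections.\<close>
definition dihedral :: "int \<Rightarrow> (int \<times> int) monoid" where
  "dihedral n = \<lparr>carrier = {0..<n} \<times> {0,1},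
     monoid.mult = (\<lambda>u w. ((fst u + (if snd u = 0 then fst w else - fst w)) mod n, (snd u + snd w) mod 2)),
     one = (0,0)\<rparr>"

definition core :: "('a, 'b) monoid_scheme \<Rightarrow> 'a set \<Rightarrow> 'a set" where
  "core G H = (\<Inter>g\<in>carrier G. {inv\<^bsub>G\<^esub> g \<otimes>\<^bsub>G\<^esub> h \<otimes>\<^bsub>G\<^esub> g | h. h \<in> H})"

end

theory Submission imports Defs begin

lemma modL: "((c::int) * (x mod p) + d) mod p = (c*x + d) mod p"
  by (metis mod_add_left_eq mod_mult_right_eq)

definition aff :: "int \<Rightarrow> int \<Rightarrow> int \<Rightarrow> int \<Rightarrow> int \<Rightarrow> (int \<times> int \<Rightarrow> int \<times> int)" where
  "aff p s k e1 e2 = (\<lambda>v\<in>Vp p. ((s * fst v + e1) mod p, (s * k * fst v + s * snd v + e2) mod p))"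

lemma aff_in_Vp: "p > 0 \<Longrightarrow> v \<in> Vp p \<Longrightarrow> aff p s k e1 e2 v \<in> Vp p"
  by (simp add: aff_def Vp_def)

lemma aff_compose:
  assumes "p > 0" and "s' * s' = 1"
  shows "compose (Vp p) (aff p s k e1 e2) (aff p s' k' f1 f2) = aff p (s*s') (k+k') (s*f1+e1) (s*k*f1 + s*f2 + e2)"
proof (rule ext)
  fix v :: "int \<times> int"
  show "compose (Vp p) (aff p s k e1 e2) (aff p s' k' f1 f2) v = aff p (s*s') (k+k') (s*f1+e1) (s*k*f1 + s*f2 + e2) v"
  proof (cases "v \<in> Vp p")
    case True
    obtain a b where v: "v = (a,b)" by force
    have m: "(a,b) \<in> Vp p" using True v by simp
    have "((s * ((s' * a + f1) mod p) + e1) mod p) = (s*s'*a + (s*f1+e1)) mod p"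
      by (metis (no_types, opaque_lifting) add.assoc mod_add_left_eq mod_mult_right_eq distrib_left mult.assoc)
    moreover have "(s * k * ((s' * a + f1) mod p) + s * ((s' * k' * a + s' * b + f2) mod p) + e2) mod p
       = (s * s' * (k + k') * a + s * s' * b + (s * k * f1 + s * f2 + e2)) mod p"
    proof -
      have "(s * k * ((s' * a + f1) mod p) + s * ((s' * k' * a + s' * b + f2) mod p) + e2) mod p
          = (s * k * (s' * a + f1) + s * (s' * k' * a + s' * b + f2) + e2) mod p"
        using modL[of "s*k" "s' * a + f1" p "s * ((s' * k' * a + s' * b + f2) mod p) + e2"]
              modL[of "s" "s' * k' * a + s' * b + f2" p "s * k * (s' * a + f1) + e2"]
        by (simp add: algebra_simps)
      also have "\<dots> = (s * s' * (k + k') * a + s * s' * b + (s * k * f1 + s * f2 + e2)) mod p"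
        by (simp add: algebra_simps)
      finally show ?thesis .
    qed
    ultimately show ?thesis using True v m assms
      by (simp add: compose_def aff_def Vp_def)
  next
    case False
    then show ?thesis by (simp add: compose_def aff_def)
  qed
qed

lemma aff_id: "p > 0 \<Longrightarrow> aff p 1 0 0 0 = (\<lambda>v\<in>Vp p. v)"
  by (rule ext) (auto simp: aff_def Vp_def)

lemma aff_inv_l:
  assumes "p > 0" "s * s = 1"
  shows "compose (Vp p) (aff p s (-k) (-s*e1) (s*k*e1 - s*e2)) (aff p s k e1 e2) = (\<lambda>v\<in>Vp p. v)"
proof -
  have "compose (Vp p) (aff p s (-k) (-s*e1) (s*k*e1 - s*e2)) (aff p s k e1 e2)
     = aff p (s*s) (-k+k) (s*e1 + (-s*e1)) (s*(-k)*e1 + s*e2 + (s*k*e1 - s*e2))"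
    by (rule aff_compose[OF assms])
  also have "\<dots> = aff p 1 0 0 0" using assms by (simp add: algebra_simps)
  finally show ?thesis using aff_id[OF assms(1)] by simp
qed

lemma aff_inv_r:
  assumes "p > 0" "s * s = 1"
  shows "compose (Vp p) (aff p s k e1 e2) (aff p s (-k) (-s*e1) (s*k*e1 - s*e2)) = (\<lambda>v\<in>Vp p. v)"
proof -
  have "compose (Vp p) (aff p s k e1 e2) (aff p s (-k) (-s*e1) (s*k*e1 - s*e2))
     = aff p (s*s) (k + -k) (s*(-s*e1) + e1) (s*k*(-s*e1) + s*(s*k*e1 - s*e2) + e2)"
    by (rule aff_compose[OF assms])
  also have "\<dots> = aff p 1 0 0 0" using assms by (simp add: algebra_simps)
  finally show ?thesis using aff_id[OF assms(1)] by simp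
qed

lemma aff_Bij:
  assumes "p > 0" "s * s = 1"
  shows "aff p s k e1 e2 \<in> Bij (Vp p)"
proof -
  let ?f = "aff p s k e1 e2" and ?g = "aff p s (-k) (-s*e1) (s*k*e1 - s*e2)"
  have l: "?g (?f x) = x" if "x \<in> Vp p" for x
    using fun_cong[OF aff_inv_l[OF assms, of k e1 e2], of x] that aff_in_Vp[OF assms(1)]
    by (simp add: compose_def)
  have r: "?f (?g x) = x" if "x \<in> Vp p" for x
    using fun_cong[OF aff_inv_r[OF assms, of k e1 e2], of x] that aff_in_Vp[OF assms(1)]
    by (simp add: compose_def)
  have "bij_betw ?f (Vp p) (Vp p)"
    by (rule bij_betwI[of _ _ _ ?g]) (use l r aff_in_Vp[OF assms(1)] in auto)
  moreover have "?f \<in> extensional (Vp p)" by (simp add: aff_def)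
  ultimately show ?thesis by (simp add: Bij_def)
qed

lemma aff_mult:
  assumes "p > 0" "s * s = 1" "s' * s' = 1"
  shows "aff p s k e1 e2 \<otimes>\<^bsub>BijGroup (Vp p)\<^esub> aff p s' k' f1 f2 = aff p (s*s') (k+k') (s*f1+e1) (s*k*f1 + s*f2 + e2)"
  using aff_Bij[OF assms(1,2)] aff_Bij[OF assms(1,3)] aff_compose[OF assms(1,3)]
  by (simp add: BijGroup_def)

lemma aff_inv:
  assumes "p > 0" "s * s = 1"
  shows "inv\<^bsub>BijGroup (Vp p)\<^esub> (aff p s k e1 e2) = aff p s (-k) (-s*e1) (s*k*e1 - s*e2)"
  apply (rule group.inv_equality[OF group_BijGroup])
  using aff_Bij[OF assms] aff_inv_l[OF assms]
  by (simp_all add: BijGroup_def)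

definition Aset :: "int \<Rightarrow> (int \<times> int \<Rightarrow> int \<times> int) set" where
  "Aset p = {aff p s k e1 e2 | s k e1 e2. s * s = 1}"

definition Kset :: "int \<Rightarrow> (int \<times> int \<Rightarrow> int \<times> int) set" where
  "Kset p = {aff p s k e1 e2 | s k e1 e2. s * s = 1 \<and> p dvd k}"

lemma gens_aff:
  assumes "p > 0"
  shows "transl p a = aff p 1 0 (fst a) (snd a)"
    and "matmap p 1 1 0 1 = aff p 1 1 0 0"
    and "matmap p (-1) 0 0 (-1) = aff p (-1) 0 0 0"
  by (simp_all add: transl_def matmap_def aff_def fun_eq_iff)

lemma G7_sub_A:
  assumes "p > 0"
  shows "G7_carrier p \<subseteq> Aset p"
proof
  fix f assume "f \<in> G7_carrier p"
  then show "f \<in> Aset p" unfolding G7_carrier_def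
  proof (induction rule: generate.induct)
    case one
    have "\<one>\<^bsub>BijGroup (Vp p)\<^esub> = aff p 1 0 0 0" using aff_id[OF assms] by (simp add: BijGroup_def)
    then show ?case unfolding Aset_def by fastforce
  next
    case (incl h)
    then consider a where "h = transl p a" | "h = matmap p 1 1 0 1" | "h = matmap p (-1) 0 0 (-1)" by blast
    then show ?case
    proof cases
      case 1 then show ?thesis using gens_aff[OF assms] unfolding Aset_def by fastforce
    next
      case 2 then show ?thesis using gens_aff[OF assms] unfolding Aset_def by fastforce
    next
      case 3 then show ?thesis using gens_aff[OF assms] unfolding Aset_def by fastforce
    qed
  next
    case (inv h)
    then have "h \<in> Aset p" using gens_aff[OF assms] unfolding Aset_def by fastforce
    then obtain s k e1 e2 where "h = aff p s k e1 e2" "s*s = 1" unfolding Aset_def by blast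
    then show ?case using aff_inv[OF assms] unfolding Aset_def by fastforce
  next
    case (eng h1 h2)
    then obtain s k e1 e2 s' k' f1 f2 where "h1 = aff p s k e1 e2" "s*s = 1" "h2 = aff p s' k' f1 f2" "s'*s'=1"
      unfolding Aset_def by blast
    moreover have "(s*s')*(s*s') = 1" using calculation by (metis mult.assoc mult.left_commute mult_1_right)
    ultimately show ?case using aff_mult[OF assms, of s s' k e1 e2 k' f1 f2] unfolding Aset_def
      by blast
  qed
qed

lemma A_Bij: "p > 0 \<Longrightarrow> Aset p \<subseteq> Bij (Vp p)"
  unfolding Aset_def using aff_Bij by blast

lemma G7_subgroup:
  assumes "p > 0"
  shows "subgroup (G7_carrier p) (BijGroup (Vp p))"
proof -
  have "(transl p ` Vp p) \<union> {matmap p 1 1 0 1, matmap p (-1) 0 0 (-1)} \<subseteq> G7_carrier p"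
    unfolding G7_carrier_def by (auto intro: generate.incl)
  then have "(transl p ` Vp p) \<union> {matmap p 1 1 0 1, matmap p (-1) 0 0 (-1)} \<subseteq> carrier (BijGroup (Vp p))"
    using G7_sub_A[OF assms] A_Bij[OF assms] by (auto simp: BijGroup_def)
  then show ?thesis unfolding G7_carrier_def
    by (rule group.generate_is_subgroup[OF group_BijGroup])
qed

lemma G7_group: "p > 0 \<Longrightarrow> group (G7 p)"
  unfolding G7_def using subgroup.subgroup_is_group[OF G7_subgroup group_BijGroup] by blast

lemma G7_simps:
  "carrier (G7 p) = G7_carrier p"
  "x \<otimes>\<^bsub>G7 p\<^esub> y = x \<otimes>\<^bsub>BijGroup (Vp p)\<^esub> y"
  "\<one>\<^bsub>G7 p\<^esub> = \<one>\<^bsub>BijGroup (Vp p)\<^esub>"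
  by (simp_all add: G7_def)

lemma G7_inv:
  assumes "p > 0" "x \<in> carrier (G7 p)"
  shows "inv\<^bsub>G7 p\<^esub> x = inv\<^bsub>BijGroup (Vp p)\<^esub> x"
  using group.m_inv_consistent[OF group_BijGroup G7_subgroup[OF assms(1)]] assms(2)
  unfolding G7_def by simp

lemma gen_K:
  assumes "p > 0" "H \<subseteq> Kset p" "H \<subseteq> carrier (G7 p)"
  shows "generate (G7 p) H \<subseteq> Kset p"
proof
  fix f assume "f \<in> generate (G7 p) H"
  then show "f \<in> Kset p"
  proof (induction rule: generate.induct)
    case one
    have "\<one>\<^bsub>G7 p\<^esub> = aff p 1 0 0 0" using aff_id[OF assms(1)] by (simp add: G7_def BijGroup_def)
    then show ?case unfolding Kset_def by fastforce
  next
    case (incl h)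
    then show ?case using assms by blast
  next
    case (inv h)
    then have "h \<in> Kset p" using assms by blast
    then obtain s k e1 e2 where "h = aff p s k e1 e2" "s*s = 1" "p dvd k" unfolding Kset_def by blast
    moreover have "inv\<^bsub>G7 p\<^esub> h = inv\<^bsub>BijGroup (Vp p)\<^esub> h" using G7_inv[OF assms(1)] inv assms by blast
    ultimately show ?case using aff_inv[OF assms(1)] unfolding Kset_def by fastforce
  next
    case (eng h1 h2)
    then obtain s k e1 e2 s' k' f1 f2 where "h1 = aff p s k e1 e2" "s*s = 1" "h2 = aff p s' k' f1 f2" "s'*s'=1"
      "p dvd k" "p dvd k'"
      unfolding Kset_def by blast
    moreover have "(s*s')*(s*s') = 1" using calculation by (metis mult.assoc mult.left_commute mult_1_right)
    moreover have "p dvd (k + k')" using calculation by simp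
    ultimately show ?case using aff_mult[OF assms(1), of s s' k e1 e2 k' f1 f2] unfolding Kset_def G7_simps
      by blast
  qed
qed

lemma ord2_K:
  assumes "Factorial_Ring.prime p" "p \<ge> 3" "r \<in> carrier (G7 p)" "group.ord (G7 p) r = 2"
  shows "r \<in> Kset p"
proof -
  have p0: "p > 0" using assms by simp
  interpret g: group "G7 p" by (rule G7_group[OF p0])
  have "r [^]\<^bsub>G7 p\<^esub> (2::nat) = \<one>\<^bsub>G7 p\<^esub>"
    using g.pow_ord_eq_1[OF assms(3)] assms(4) by simp
  moreover have "r [^]\<^bsub>G7 p\<^esub> (2::nat) = r \<otimes>\<^bsub>G7 p\<^esub> r"
    using assms(3) by (simp add: numeral_2_eq_2)
  ultimately have "r \<otimes>\<^bsub>G7 p\<^esub> r = \<one>\<^bsub>G7 p\<^esub>" by simp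
  moreover obtain s k e1 e2 where r: "r = aff p s k e1 e2" "s*s = 1"
    using G7_sub_A[OF p0] assms(3) unfolding G7_simps Aset_def by blast
  ultimately have "aff p (s*s) (k+k) (s*e1+e1) (s*k*e1 + s*e2 + e2) = (\<lambda>v\<in>Vp p. v)"
    using aff_mult[OF p0 r(2) r(2)] by (simp add: G7_simps BijGroup_def)
  note eq = this
  have "(0::int,0::int) \<in> Vp p" "(1::int,0::int) \<in> Vp p" using assms(2) by (simp_all add: Vp_def)
  then have a: "aff p (s*s) (k+k) (s*e1+e1) (s*k*e1 + s*e2 + e2) (0,0) = (0,0)"
    and b: "aff p (s*s) (k+k) (s*e1+e1) (s*k*e1 + s*e2 + e2) (1,0) = (1,0)"
    using fun_cong[OF eq, of "(0,0)"] fun_cong[OF eq, of "(1,0)"] by simp_all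
  have "(s*k*e1 + s*e2 + e2) mod p = 0" using a p0 by (simp add: aff_def Vp_def)
  moreover have "(s*s*(k+k) + (s*k*e1 + s*e2 + e2)) mod p = 0"
  proof -
    have v: "(1::int,0::int) \<in> Vp p" using assms(2) by (simp add: Vp_def)
    have "snd (aff p (s*s) (k+k) (s*e1+e1) (s*k*e1 + s*e2 + e2) (1,0)) = (s*s*(k+k)*1 + (s*s)*0 + (s*k*e1 + s*e2 + e2)) mod p"
      unfolding aff_def using v by (simp only: restrict_apply' fst_conv snd_conv if_True)
    then show ?thesis using b by simp
  qed
  ultimately have "p dvd (s*s*(k+k) + (s*k*e1 + s*e2 + e2))" "p dvd (s*k*e1 + s*e2 + e2)"
    by (simp_all add: dvd_eq_mod_eq_0)
  then have "p dvd (s*s*(k+k) + (s*k*e1 + s*e2 + e2)) - (s*k*e1 + s*e2 + e2)" by (rule dvd_diff)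
  then have "p dvd (s*s*(k+k))" by simp
  moreover have "s*s*(k+k) = 2*k" using r(2) by simp
  ultimately have "p dvd (2*k)" by metis
  moreover have "\<not> p dvd 2" using assms(2) zdvd_imp_le[of p 2] by auto
  ultimately have "p dvd k" using prime_dvd_mult_iff[OF assms(1), of 2 k] by simp
  then show ?thesis using r unfolding Kset_def by blast
qed

lemma x_notin_K:
  assumes "p \<ge> 3"
  shows "matmap p 1 1 0 1 \<notin> Kset p"
proof
  assume "matmap p 1 1 0 1 \<in> Kset p"
  then obtain s k e1 e2 where r: "matmap p 1 1 0 1 = aff p s k e1 e2" "p dvd k" unfolding Kset_def by blast
  have v: "(0::int,0::int) \<in> Vp p" "(1::int,0::int) \<in> Vp p" using assms by (simp_all add: Vp_def)
  have "snd (matmap p 1 1 0 1 (0,0)) = 0" using v by (simp add: matmap_def)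
  moreover have "snd (aff p s k e1 e2 (0,0)) = e2 mod p" using v by (simp add: aff_def)
  ultimately have e2: "e2 mod p = 0" using r(1) by simp
  have "snd (matmap p 1 1 0 1 (1,0)) = 1" using v assms by (simp add: matmap_def)
  moreover have "snd (aff p s k e1 e2 (1,0)) = (s*k + e2) mod p" using v by (simp add: aff_def)
  moreover have "(s*k + e2) mod p = e2 mod p"
  proof -
    obtain m where m: "k = p*m" using r(2) by (elim dvdE)
    have "(s*k + e2) mod p = (e2 + (s*m)*p) mod p" unfolding m by (simp add: algebra_simps)
    also have "\<dots> = e2 mod p" by (rule mod_mult_self1)
    finally show ?thesis .
  qed
  ultimately show False using r(1) e2 by simp
qed

theorem mainTheorem14:
  fixes p :: int and r1 r2 :: "int \<times> int \<Rightarrow> int \<times> int"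
  assumes "Factorial_Ring.prime p" and "p \<ge> 3"
    and "r1 \<in> carrier (G7 p)" and "r2 \<in> carrier (G7 p)"
    and "group.ord (G7 p) r1 = 2" and "group.ord (G7 p) r2 = 2"
    and "(G7 p)\<lparr>carrier := generate (G7 p) {r1, r2}\<rparr> \<cong> dihedral p"
    and "core (G7 p) (generate (G7 p) {r1, r2}) = {\<one>\<^bsub>G7 p\<^esub>}"
  shows "\<forall>r0 \<in> carrier (G7 p). group.ord (G7 p) r0 = 2 \<longrightarrow>
           generate (G7 p) {r0, r1, r2} \<noteq> carrier (G7 p)"
proof (intro ballI impI)
  fix r0 assume r0: "r0 \<in> carrier (G7 p)" "group.ord (G7 p) r0 = 2"
  have p0: "p > 0" using assms(2) by simp
  have "{r0, r1, r2} \<subseteq> Kset p"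
    using ord2_K[OF assms(1,2) r0] ord2_K[OF assms(1,2) assms(3,5)] ord2_K[OF assms(1,2) assms(4,6)] by simp
  moreover have "{r0, r1, r2} \<subseteq> carrier (G7 p)" using r0 assms(3,4) by blast
  ultimately have sub: "generate (G7 p) {r0, r1, r2} \<subseteq> Kset p" by (rule gen_K[OF p0])
  have "matmap p 1 1 0 1 \<in> carrier (G7 p)"
    unfolding G7_simps G7_carrier_def by (auto intro: generate.incl)
  then show "generate (G7 p) {r0, r1, r2} \<noteq> carrier (G7 p)"
    using sub x_notin_K[OF assms(2)] by blast
qed

end
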